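(* Let $B_H$ be an $\mathbb{F}$-adapted fractional Brownian motion with Hurst parameter $\frac12<H<1$ (with continuous paths). Then $B_H\in\mathbf{Q}^p(\mathbb{F})$ for every $p>\frac1H$.
   Context: $\mathbb{F}$ is the usual augmentation of the filtration of a $d$-dimensional Brownian motion on $(\Omega,\mathcal{F},\mathbb{P})$; $0<T<\infty$. A random partition is a strictly increasing sequence $\tau=(S_n)_{n\ge0}$ of $\mathbb{F}$-stopping times with $S_0=0$ and $S_n\uparrow+\infty$ a.s.; $\mathbb{T}$ is the set of all random partitions. For a process $Y$ on $[0,T]$, $Q^\alpha_\tau(Y)=|Y(0)|^\alpha+\sum_{n\ge0}|Y(S_{n+1})-Y(S_n)|^\alpha$ (increments over $[0,T]$, i.e. evaluating at $S_n\wedge T$). $\mathbf{Q}^\alpha(\mathbb{F})$ is the set of Wiener functionals ($\mathbb{F}$-adapted continuous processes $Y$ with $\mathbb{E}\sup_{t\le T}|Y(t)|^2<\infty$) such that $\|Y\|_{\mathbf{Q}^\alpha}=\sup_{\tau\in\mathbb{T}}[\mathbb{E}Q^\alpha_\tau(Y)]^{1/\alpha}<\infty$. *)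

theory Defs
  imports "HOL-Probability.Probability"
begin

definition brownian_motion :: "'a measure \<Rightarrow> (real \<Rightarrow> 'a \<Rightarrow> real^'d) \<Rightarrow> bool" where
  "brownian_motion M W \<longleftrightarrow>
     prob_space M \<and>
     (\<forall>t. W t \<in> borel_measurable M) \<and>
     (\<forall>\<omega>\<in>space M. W 0 \<omega> = 0) \<and>
     (\<forall>\<omega>\<in>space M. continuous_on {0..} (\<lambda>t. W t \<omega>)) \<and>
     (\<forall>(n::nat) (t::nat \<Rightarrow> real). 0 \<le> t 0 \<and> (\<forall>i<n. t i \<le> t (Suc i)) \<longrightarrow>
        prob_space.indep_vars M (\<lambda>_. borel) (\<lambda>i \<omega>. W (t (Suc i)) \<omega> - W (t i) \<omega>) {..<n}) \<and>
     (\<forall>s t. 0 \<le> s \<and> s < t \<longrightarrow>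
        prob_space.indep_vars M (\<lambda>_. borel) (\<lambda>i \<omega>. (W t \<omega> - W s \<omega>) $ i) UNIV \<and>
        (\<forall>i. distributed M lborel (\<lambda>\<omega>. (W t \<omega> - W s \<omega>) $ i)
                (\<lambda>x. ennreal (normal_density 0 (sqrt (t - s)) x))))"

(* The usual augmentation F_t of the natural filtration of W:
   F_t = intersection over u > t of sigma(W_s, s <= u; all P-null sets of the completion) *)
definition bm_filt :: "'a measure \<Rightarrow> (real \<Rightarrow> 'a \<Rightarrow> real^'d::finite) \<Rightarrow> real \<Rightarrow> 'a set set" where
  "bm_filt M W t = (\<Inter>u\<in>{t<..}. sigma_sets (space M)
      ((\<Union>s\<in>{0..u}. {W s -` A \<inter> space M | A. A \<in> sets borel}) \<union> null_sets (completion M)))"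

definition bm_stopping_time :: "'a measure \<Rightarrow> (real \<Rightarrow> 'a \<Rightarrow> real^'d::finite) \<Rightarrow> ('a \<Rightarrow> real) \<Rightarrow> bool" where
  "bm_stopping_time M W S \<longleftrightarrow> (\<forall>t\<ge>0. {\<omega>\<in>space M. S \<omega> \<le> t} \<in> bm_filt M W t)"

definition random_partition :: "'a measure \<Rightarrow> (real \<Rightarrow> 'a \<Rightarrow> real^'d::finite) \<Rightarrow> (nat \<Rightarrow> 'a \<Rightarrow> real) \<Rightarrow> bool" where
  "random_partition M W S \<longleftrightarrow>
     (\<forall>n. bm_stopping_time M W (S n)) \<and>
     (\<forall>\<omega>\<in>space M. S 0 \<omega> = 0) \<and>
     (\<forall>n. \<forall>\<omega>\<in>space M. S n \<omega> < S (Suc n) \<omega>) \<and>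
     (AE \<omega> in completion M. filterlim (\<lambda>n. S n \<omega>) at_top sequentially)"

definition Qsum :: "real \<Rightarrow> real \<Rightarrow> (real \<Rightarrow> 'a \<Rightarrow> real) \<Rightarrow> (nat \<Rightarrow> 'a \<Rightarrow> real) \<Rightarrow> 'a \<Rightarrow> ennreal" where
  "Qsum \<alpha> T Y S \<omega> = ennreal (\<bar>Y 0 \<omega>\<bar> powr \<alpha>) +
     (\<Sum>n. ennreal (\<bar>Y (min (S (Suc n) \<omega>) T) \<omega> - Y (min (S n \<omega>) T) \<omega>\<bar> powr \<alpha>))"

(* sup over tau of E Q^alpha_tau(Y);  ||Y||_{Q^alpha} is its 1/alpha-th power *)
definition Qnorm_pow :: "'a measure \<Rightarrow> (real \<Rightarrow> 'a \<Rightarrow> real^'d::finite) \<Rightarrow> real \<Rightarrow> real \<Rightarrow> (real \<Rightarrow> 'a \<Rightarrow> real) \<Rightarrow> ennreal" where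
  "Qnorm_pow M W T \<alpha> Y = (SUP S\<in>{S. random_partition M W S}. \<integral>\<^sup>+ \<omega>. Qsum \<alpha> T Y S \<omega> \<partial>completion M)"

definition wiener_functional :: "'a measure \<Rightarrow> (real \<Rightarrow> 'a \<Rightarrow> real^'d::finite) \<Rightarrow> real \<Rightarrow> (real \<Rightarrow> 'a \<Rightarrow> real) \<Rightarrow> bool" where
  "wiener_functional M W T Y \<longleftrightarrow>
     (\<forall>t\<in>{0..T}. Y t \<in> borel_measurable (sigma (space M) (bm_filt M W t))) \<and>
     (\<forall>\<omega>\<in>space M. continuous_on {0..T} (\<lambda>t. Y t \<omega>)) \<and>
     (\<integral>\<^sup>+ \<omega>. ennreal ((SUP t\<in>{0..T}. \<bar>Y t \<omega>\<bar>)\<^sup>2) \<partial>completion M) < \<infinity>"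

(* membership in Q^alpha(F):  ||Y|| < \<infinity>  iff  sup_tau E Q < \<infinity>  (alpha > 0) *)
definition in_Q :: "'a measure \<Rightarrow> (real \<Rightarrow> 'a \<Rightarrow> real^'d::finite) \<Rightarrow> real \<Rightarrow> real \<Rightarrow> (real \<Rightarrow> 'a \<Rightarrow> real) \<Rightarrow> bool" where
  "in_Q M W T \<alpha> Y \<longleftrightarrow> wiener_functional M W T Y \<and> Qnorm_pow M W T \<alpha> Y < \<infinity>"

definition fbm_cov :: "real \<Rightarrow> real \<Rightarrow> real \<Rightarrow> real" where
  "fbm_cov H s t = (s powr (2*H) + t powr (2*H) - \<bar>t - s\<bar> powr (2*H)) / 2"

(* fractional Brownian motion with Hurst parameter H on the measure space N, continuous paths:
   centered Gaussian process on [0,\<infinity>) with covariance fbm_cov H *)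
definition fbm :: "'a measure \<Rightarrow> real \<Rightarrow> (real \<Rightarrow> 'a \<Rightarrow> real) \<Rightarrow> bool" where
  "fbm N H B \<longleftrightarrow>
     (\<forall>t\<ge>0. B t \<in> borel_measurable N) \<and>
     (\<forall>\<omega>\<in>space N. continuous_on {0..} (\<lambda>t. B t \<omega>)) \<and>
     (\<forall>(n::nat) (c::nat \<Rightarrow> real) (t::nat \<Rightarrow> real). (\<forall>i<n. 0 \<le> t i) \<longrightarrow>
        (let v = (\<Sum>i<n. \<Sum>j<n. c i * c j * fbm_cov H (t i) (t j)) in
          (0 < v \<longrightarrow> distributed N lborel (\<lambda>\<omega>. \<Sum>i<n. c i * B (t i) \<omega>)
                          (\<lambda>x. ennreal (normal_density 0 (sqrt v) x))) \<and>
          (v = 0 \<longrightarrow> (AE \<omega> in N. (\<Sum>i<n. c i * B (t i) \<omega>) = 0))))"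

end

theory Submission
  imports Defs
begin


definition dy :: "nat \<Rightarrow> real \<Rightarrow> real" where
  "dy n x = of_int \<lfloor>x * 2^n\<rfloor> / 2^n"

lemma dy_step:
  fixes x :: real
  assumes "0 \<le> x" "x \<le> 1"
  shows "dy (Suc n) x = dy n x \<or>
     (\<exists>k::nat. k < 2^Suc n \<and> dy (Suc n) x = real (k+1) / 2^Suc n \<and> dy n x = real k / 2^Suc n)"
proof -
  define j where "j = \<lfloor>x * 2^n\<rfloor>"
  define i where "i = \<lfloor>x * 2^Suc n\<rfloor>"
  have j1: "of_int j \<le> x * 2^n" "x * 2^n < of_int j + 1" unfolding j_def by linarith+
  have i1: "of_int i \<le> x * 2^Suc n" "x * 2^Suc n < of_int i + 1" unfolding i_def by linarith+
  have e: "x * 2^Suc n = 2 * (x * 2^n)" by simp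
  have "2*j \<le> i" unfolding i_def le_floor_iff using j1 e by simp
  moreover have "i \<le> 2*j+1" using j1 i1 e by linarith
  ultimately have "i = 2*j \<or> i = 2*j+1" by linarith
  moreover have "j \<ge> 0" unfolding j_def using assms by simp
  moreover have "i \<le> 2^Suc n"
  proof -
    have "x * 2^Suc n \<le> (2::real)^Suc n" using assms by (intro mult_left_le_one_le) auto
    then have "of_int i \<le> (2::real)^Suc n" using i1(1) by linarith
    then show ?thesis by (metis of_int_numeral of_int_power of_int_le_iff)
  qed
  ultimately show ?thesis
  proof (elim disjE)
    assume "i = 2*j"
    then have "dy (Suc n) x = dy n x" unfolding dy_def i_def[symmetric] j_def[symmetric] by simp
    then show ?thesis by blast
  next
    assume h: "i = 2*j+1" "j \<ge> 0" "i \<le> 2^Suc n"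
    define k where "k = nat (2*j)"
    have "real k = 2 * of_int j" unfolding k_def using h by simp
    moreover have "k < 2^Suc n"
    proof -
      have "2*j < 2^Suc n" using h by linarith
      then show ?thesis unfolding k_def using h by (subst nat_less_iff) auto
    qed
    ultimately show ?thesis unfolding dy_def i_def[symmetric] j_def[symmetric] using h
      by (intro disjI2 exI[of _ k]) (auto simp: field_simps)
  qed
qed

lemma dy_bounds:
  fixes x :: real
  assumes "0 \<le> x" "x \<le> 1"
  shows "0 \<le> dy n x" "dy n x \<le> x" "x - dy n x < 1/2^n"
proof -
  have a: "of_int \<lfloor>x * 2^n\<rfloor> \<le> x * 2^n" "x * 2^n < of_int \<lfloor>x * 2^n\<rfloor> + 1" by linarith+
  show "0 \<le> dy n x" unfolding dy_def using assms by simp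
  show "dy n x \<le> x" unfolding dy_def using a by (simp add: divide_le_eq)
  have "x * 2^n - 1 < of_int \<lfloor>x * 2^n\<rfloor>" using a by linarith
  then have "(x * 2^n - 1) / 2^n < of_int \<lfloor>x * 2^n\<rfloor> / 2^n" by (simp add: divide_strict_right_mono)
  then show "x - dy n x < 1/2^n" unfolding dy_def by (simp add: diff_divide_distrib)
qed

lemma dy_tendsto:
  fixes x :: real
  assumes "0 \<le> x" "x \<le> 1"
  shows "(\<lambda>n. dy n x) \<longlonglongrightarrow> x"
proof -
  have h2: "(\<lambda>n. (1/2::real)^n) \<longlonglongrightarrow> 0" by (rule LIMSEQ_power_zero) simp
  have z: "(\<lambda>n. x - (1/2::real)^n) \<longlonglongrightarrow> x" using tendsto_diff[OF tendsto_const h2, of x] by simp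
  show ?thesis
  proof (rule tendsto_sandwich[OF _ _ z tendsto_const])
    show "\<forall>\<^sub>F n in sequentially. x - (1/2)^n \<le> dy n x"
      using dy_bounds[OF assms] by (auto simp: power_one_over less_imp_le intro!: always_eventually)
      (smt (verit) dy_bounds(3)[OF assms] power_one_over)
    show "\<forall>\<^sub>F n in sequentially. dy n x \<le> x" using dy_bounds[OF assms] by auto
  qed
qed

lemma chain_bound:
  fixes g :: "real \<Rightarrow> real" and L r :: real
  assumes cont: "continuous_on {0..1} g" and r: "0 < r" "r < 1" and L: "0 \<le> L"
    and inc: "\<And>n k. k < 2^n \<Longrightarrow> \<bar>g (real (k+1)/2^n) - g (real k/2^n)\<bar> \<le> L * r^n"
    and x: "0 \<le> x" "x \<le> 1"
  shows "\<bar>g x - g (dy m x)\<bar> \<le> L * r^m * (r/(1-r))"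
proof -
  have step: "\<bar>g (dy (Suc n) x) - g (dy n x)\<bar> \<le> L * r^Suc n" for n
    using dy_step[OF x, of n]
  proof (elim disjE exE conjE)
    assume "dy (Suc n) x = dy n x" then show ?thesis using L r by simp
  next
    fix k :: nat assume "k < 2^Suc n" "dy (Suc n) x = real (k + 1) / 2 ^ Suc n" "dy n x = real k / 2 ^ Suc n"
    then show ?thesis using inc[of k "Suc n"] by simp
  qed
  have geo: "(\<Sum>i<d. r^i) \<le> 1/(1-r)" for d
  proof -
    have "(\<Sum>i<d. r^i) \<le> (\<Sum>i. r^i)"
      by (rule sum_le_suminf) (use r in \<open>auto intro!: summable_geometric\<close>)
    also have "\<dots> = 1/(1-r)" using r by (simp add: suminf_geometric)
    finally show ?thesis .
  qed
  have tele: "\<bar>g (dy (d+m) x) - g (dy m x)\<bar> \<le> L * (\<Sum>i<d. r^(m+i+1))" for d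
  proof (induction d)
    case 0 then show ?case by simp
  next
    case (Suc d)
    have "\<bar>g (dy (Suc d+m) x) - g (dy m x)\<bar> \<le> \<bar>g (dy (Suc (d+m)) x) - g (dy (d+m) x)\<bar> + \<bar>g (dy (d+m) x) - g (dy m x)\<bar>"
      by simp
    also have "\<dots> \<le> L * r^(m+d+1) + L * (\<Sum>i<d. r^(m+i+1))"
      using step[of "d+m"] Suc.IH by (simp add: add.commute)
    finally show ?case by (simp add: algebra_simps)
  qed
  have bnd: "L * (\<Sum>i<d. r^(m+i+1)) \<le> L * r^m * (r/(1-r))" for d
  proof -
    have "(\<Sum>i<d. r^(m+i+1)) = r^m * r * (\<Sum>i<d. r^i)"
      by (simp add: sum_distrib_left power_add mult_ac)
    also have "\<dots> \<le> r^m * r * (1/(1-r))" using geo[of d] r by (intro mult_left_mono) auto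
    finally have "L * (\<Sum>i<d. r^(m+i+1)) \<le> L * (r^m * r * (1/(1-r)))" using L by (rule mult_left_mono)
    then show ?thesis by (simp add: mult.assoc)
  qed
  have lim: "(\<lambda>d. \<bar>g (dy (d+m) x) - g (dy m x)\<bar>) \<longlonglongrightarrow> \<bar>g x - g (dy m x)\<bar>"
  proof -
    have "(\<lambda>d. dy (d+m) x) \<longlonglongrightarrow> x"
      using LIMSEQ_ignore_initial_segment[OF dy_tendsto[OF x], of m] by simp
    then have "(\<lambda>d. g (dy (d+m) x)) \<longlonglongrightarrow> g x"
      by (rule continuous_on_tendsto_compose[OF cont]) (use x dy_bounds[OF x] in \<open>auto intro!: always_eventually intro: order_trans\<close>)
    then show ?thesis by (intro tendsto_intros)
  qed
  show ?thesis
    by (rule LIMSEQ_le_const2[OF lim]) (use tele bnd order_trans in blast)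
qed

lemma holder_dyadic:
  fixes g :: "real \<Rightarrow> real" and L r :: real
  assumes cont: "continuous_on {0..1} g" and r: "0 < r" "r < 1" and L: "0 \<le> L"
    and inc: "\<And>n k. k < 2^n \<Longrightarrow> \<bar>g (real (k+1)/2^n) - g (real k/2^n)\<bar> \<le> L * r^n"
    and st: "0 \<le> s" "s \<le> t" "t \<le> 1" and d: "t - s \<le> 1/2^m"
  shows "\<bar>g t - g s\<bar> \<le> L * r^m * (1 + 2 * (r/(1-r)))"
proof -
  have s1: "0 \<le> s" "s \<le> 1" and t1: "0 \<le> t" "t \<le> 1" using st by auto
  define js where "js = \<lfloor>s * 2^m\<rfloor>"
  define jt where "jt = \<lfloor>t * 2^m\<rfloor>"
  have "js \<le> jt" unfolding js_def jt_def using st by (intro floor_mono) (simp add: mult_right_mono)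
  moreover have "t * 2^m \<le> s * 2^m + 1" using d by (simp add: field_simps)
  then have "jt \<le> js + 1" unfolding js_def jt_def by linarith
  ultimately have cases: "jt = js \<or> jt = js + 1" by linarith
  have A: "\<bar>g t - g (dy m t)\<bar> \<le> L * r^m * (r/(1-r))" by (rule chain_bound[OF cont r L inc t1])
  have B: "\<bar>g s - g (dy m s)\<bar> \<le> L * r^m * (r/(1-r))" by (rule chain_bound[OF cont r L inc s1])
  have C: "\<bar>g (dy m t) - g (dy m s)\<bar> \<le> L * r^m"
    using cases
  proof
    assume "jt = js" then have "dy m t = dy m s" unfolding dy_def js_def jt_def by simp
    then show ?thesis using L r by simp
  next
    assume h: "jt = js + 1"
    have "js \<ge> 0" unfolding js_def using st by simp
    have "of_int jt \<le> t * 2^m" unfolding jt_def by linarith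
    also have "\<dots> \<le> 2^m" using t1 by (intro mult_left_le_one_le) auto
    finally have "jt \<le> 2^m" by (metis of_int_numeral of_int_power of_int_le_iff)
    define k where "k = nat js"
    have "k < 2^m" unfolding k_def using h \<open>jt \<le> 2^m\<close> \<open>js \<ge> 0\<close> by (subst nat_less_iff) auto
    moreover have "dy m s = real k / 2^m" "dy m t = real (k+1) / 2^m"
      unfolding dy_def js_def[symmetric] jt_def[symmetric] k_def using h \<open>js \<ge> 0\<close> by auto
    ultimately show ?thesis using inc[of k m] by simp
  qed
  have "\<bar>g t - g s\<bar> \<le> \<bar>g t - g (dy m t)\<bar> + \<bar>g (dy m t) - g (dy m s)\<bar> + \<bar>g s - g (dy m s)\<bar>"
    by linarith
  also have "\<dots> \<le> L * r^m * (r/(1-r)) + L * r^m + L * r^m * (r/(1-r))"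
    using A B C by linarith
  finally show ?thesis by (simp add: algebra_simps)
qed

lemma dyadic_scale:
  fixes \<delta> :: real
  assumes "0 < \<delta>" "\<delta> \<le> 1"
  obtains m :: nat where "\<delta> \<le> (1/2)^m" "(1/2)^m \<le> 2 * \<delta>"
proof -
  obtain n :: nat where "(1/2::real)^n < \<delta>" using real_arch_pow_inv[of \<delta> "1/2::real"] assms by auto
  from ex_least_nat_le[of "\<lambda>n. (1/2::real)^n < \<delta>", OF this]
  obtain k where k: "\<forall>i<k. \<not> (1/2::real)^i < \<delta>" "(1/2::real)^k < \<delta>" by blast
  have "k \<noteq> 0" using k assms by (intro notI) simp
  then obtain m where km: "k = Suc m" by (cases k) auto
  have "\<delta> \<le> (1/2)^m" using k(1) km by (simp add: not_less)
  moreover have "(1/2)^m \<le> 2 * \<delta>" using k(2) km by simp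
  ultimately show ?thesis by (rule that)
qed

lemma holder_powr:
  fixes g :: "real \<Rightarrow> real" and L p :: real
  defines "r \<equiv> 2 powr (- (1/p))"
  defines "K \<equiv> 1 + 2 * (r/(1-r))"
  assumes cont: "continuous_on {0..1} g" and p: "0 < p" and L: "0 \<le> L"
    and inc: "\<And>n k. k < 2^n \<Longrightarrow> \<bar>g (real (k+1)/2^n) - g (real k/2^n)\<bar> \<le> L * r^n"
    and st: "0 \<le> s" "s \<le> t" "t \<le> 1"
  shows "\<bar>g t - g s\<bar> powr p \<le> (L * K) powr p * 2 * (t - s)"
proof -
  have r: "0 < r" "r < 1" unfolding r_def using p by (auto intro!: powr_less_one)
  have K: "0 \<le> K" unfolding K_def using r by auto
  show ?thesis
  proof (cases "s = t")
    case True then show ?thesis by simp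
  next
    case False
    then have d: "0 < t - s" "t - s \<le> 1" using st by auto
    obtain m :: nat where m: "t - s \<le> (1/2)^m" "(1/2)^m \<le> 2 * (t - s)" by (rule dyadic_scale[OF d])
    have m1: "t - s \<le> 1/2^m" using m(1) by (simp add: power_one_over)
    have "\<bar>g t - g s\<bar> \<le> L * r^m * K"
      unfolding K_def using holder_dyadic[OF cont r L inc st m1] .
    also have "r^m = ((1/2)^m) powr (1/p)"
    proof -
      have "r^m = 2 powr (real m * (- (1/p)))" unfolding r_def by (rule powr_power) simp
      also have "\<dots> = (2 powr (- real m)) powr (1/p)" by (simp add: powr_powr)
      also have "2 powr (- real m) = (1/2::real)^m" by (simp add: powr_minus powr_realpow power_one_over inverse_eq_divide)
      finally show ?thesis .
    qed
    finally have "\<bar>g t - g s\<bar> \<le> (L * K) * ((1/2)^m) powr (1/p)" by (simp add: mult_ac)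
    then have "\<bar>g t - g s\<bar> powr p \<le> ((L * K) * ((1/2)^m) powr (1/p)) powr p"
      using p by (intro powr_mono2) auto
    also have "\<dots> = (L * K) powr p * (1/2)^m"
      using L K p by (simp add: powr_mult powr_powr)
    also have "\<dots> \<le> (L * K) powr p * (2 * (t - s))" using m by (intro mult_left_mono) auto
    finally show ?thesis by (simp add: algebra_simps)
  qed
qed

lemma holder_sup:
  fixes g :: "real \<Rightarrow> real" and L p :: real
  defines "r \<equiv> 2 powr (- (1/p))"
  defines "K \<equiv> 1 + 2 * (r/(1-r))"
  assumes cont: "continuous_on {0..1} g" and p: "0 < p" and L: "0 \<le> L"
    and inc: "\<And>n k. k < 2^n \<Longrightarrow> \<bar>g (real (k+1)/2^n) - g (real k/2^n)\<bar> \<le> L * r^n"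
    and t: "0 \<le> t" "t \<le> 1"
  shows "\<bar>g t - g 0\<bar> \<le> L * K"
proof -
  have r: "0 < r" "r < 1" unfolding r_def using p by (auto intro!: powr_less_one)
  have "\<bar>g t - g 0\<bar> \<le> L * r^0 * K"
    unfolding K_def by (rule holder_dyadic[OF cont r L inc]) (use t in auto)
  then show ?thesis by simp
qed



lemma fbm_incr:
  assumes F: "fbm N H B" and st: "0 \<le> s" "s < t"
  shows "distributed N lborel (\<lambda>\<omega>. B t \<omega> - B s \<omega>) (\<lambda>x. ennreal (normal_density 0 ((t-s) powr H) x))"
proof -
  define c :: "nat \<Rightarrow> real" where "c i = (if i = 0 then 1 else -1)" for i
  define tt :: "nat \<Rightarrow> real" where "tt i = (if i = 0 then t else s)" for i
  note X = F[unfolded fbm_def, THEN conjunct2, THEN conjunct2, rule_format, of 2 tt c]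
  have pos: "\<forall>i<2. 0 \<le> tt i" using st by (auto simp: tt_def)
  have v: "(\<Sum>i<2. \<Sum>j<2. c i * c j * fbm_cov H (tt i) (tt j)) = (t-s) powr (2*H)"
    using st by (simp add: c_def tt_def fbm_cov_def numeral_2_eq_2 abs_minus_commute field_simps)
  have sm: "(\<lambda>\<omega>. \<Sum>i<2. c i * B (tt i) \<omega>) = (\<lambda>\<omega>. B t \<omega> - B s \<omega>)"
    by (simp add: numeral_2_eq_2 c_def tt_def)
  have "0 < (t-s) powr (2*H)" using st by simp
  have sq: "sqrt ((t-s) powr (2*H)) = (t-s) powr H"
  proof -
    have "((t-s) powr H)^2 = (t-s) powr (2*H)" using st by (subst powr_power) auto
    then show ?thesis by (metis abs_of_nonneg powr_ge_zero real_sqrt_abs)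
  qed
  show ?thesis using X[OF pos[rule_format]] \<open>0 < (t-s) powr (2*H)\<close> unfolding Let_def v sm sq by auto
qed

lemma fbm_zero:
  assumes F: "fbm N H B"
  shows "AE \<omega> in N. B 0 \<omega> = 0"
proof -
  note X = F[unfolded fbm_def, THEN conjunct2, THEN conjunct2, rule_format, of 1 "\<lambda>_. 0" "\<lambda>_. 1"]
  have "fbm_cov H 0 0 = 0" by (simp add: fbm_cov_def)
  then show ?thesis using X by (simp add: Let_def)
qed

lemma normal_moment_nn:
  assumes D: "distributed N lborel X (\<lambda>x. ennreal (normal_density 0 \<sigma> x))" and \<sigma>: "0 < \<sigma>"
  shows "(\<integral>\<^sup>+\<omega>. ennreal ((X \<omega>)^(2*k)) \<partial>N) = ennreal (fact (2*k) / ((2/\<sigma>\<^sup>2)^k * fact k))"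
proof -
  have meas: "(\<lambda>x::real. ennreal (x^(2*k))) \<in> borel_measurable lborel" by measurable
  have hb: "has_bochner_integral lborel (\<lambda>x. normal_density 0 \<sigma> x * x^(2*k)) (fact (2*k) / ((2/\<sigma>\<^sup>2)^k * fact k))"
    using normal_moment_even[where \<mu>=0 and k=k, OF \<sigma>] by simp
  have "(\<integral>\<^sup>+\<omega>. ennreal ((X \<omega>)^(2*k)) \<partial>N) = (\<integral>\<^sup>+x. ennreal (normal_density 0 \<sigma> x) * ennreal (x^(2*k)) \<partial>lborel)"
    using distributed_nn_integral[OF D meas] by simp
  also have "\<dots> = (\<integral>\<^sup>+x. ennreal (normal_density 0 \<sigma> x * x^(2*k)) \<partial>lborel)"
    by (intro nn_integral_cong) (simp add: ennreal_mult normal_density_nonneg)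
  also have "\<dots> = ennreal (integral\<^sup>L lborel (\<lambda>x. normal_density 0 \<sigma> x * x^(2*k)))"
    by (rule nn_integral_eq_integral[OF hb[unfolded has_bochner_integral_iff, THEN conjunct1]]) (simp add: normal_density_nonneg)
  also have "\<dots> = ennreal (fact (2*k) / ((2/\<sigma>\<^sup>2)^k * fact k))"
    using hb by (simp add: has_bochner_integral_integral_eq)
  finally show ?thesis .
qed



lemma root_bound:
  fixes a z :: real and j :: nat
  assumes "0 \<le> a" "a^j \<le> z" "0 < j"
  shows "a \<le> z powr (1/j)"
proof (cases "a = 0")
  case True then show ?thesis by simp
next
  case False
  then have "a = (a^j) powr (1/j)" using assms by (simp add: powr_realpow[symmetric] powr_powr)
  also have "\<dots> \<le> z powr (1/j)" using assms by (intro powr_mono2) auto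
  finally show ?thesis .
qed

lemma powr_le_1plus:
  fixes z e :: real
  assumes "0 \<le> z" "0 \<le> e" "e \<le> 1"
  shows "z powr e \<le> 1 + z"
proof (cases "z \<le> 1")
  case True
  then have "z powr e \<le> 1 powr e" using assms by (intro powr_mono2) auto
  then show ?thesis using assms by simp
next
  case False
  then have "z powr e \<le> z powr 1" using assms by (intro powr_mono) auto
  then show ?thesis using False by simp
qed

lemma partition_sum:
  fixes f :: "real \<Rightarrow> real" and s :: "nat \<Rightarrow> real" and A T p :: real
  assumes s0: "s 0 = 0" and sinc: "\<And>n. s n < s (Suc n)" and T: "0 < T" and A: "0 \<le> A"
    and bnd: "\<And>u v. 0 \<le> u \<Longrightarrow> u \<le> v \<Longrightarrow> v \<le> T \<Longrightarrow> \<bar>f v - f u\<bar> powr p \<le> A * (v - u)"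
  shows "(\<Sum>n. ennreal (\<bar>f (min (s (Suc n)) T) - f (min (s n) T)\<bar> powr p)) \<le> ennreal (A * T)"
proof -
  define mn where "mn n = min (s n) T" for n
  have snn: "0 \<le> s n" for n
  proof (induction n)
    case 0 then show ?case using s0 by simp
  next
    case (Suc n) then show ?case using sinc[of n] by simp
  qed
  have mono: "mn n \<le> mn (Suc n)" for n unfolding mn_def using sinc[of n] by simp
  have mb: "0 \<le> mn n" "mn n \<le> T" for n unfolding mn_def using snn[of n] T by auto
  have m0: "mn 0 = 0" unfolding mn_def using s0 T by simp
  have "(\<Sum>i<N. ennreal (\<bar>f (mn (Suc i)) - f (mn i)\<bar> powr p)) \<le> ennreal (A * T)" for N
  proof -
    have "(\<Sum>i<N. ennreal (\<bar>f (mn (Suc i)) - f (mn i)\<bar> powr p)) \<le> (\<Sum>i<N. ennreal (A * (mn (Suc i) - mn i)))"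
      by (intro sum_mono ennreal_leI bnd mb mono)
    also have "\<dots> = ennreal (\<Sum>i<N. A * (mn (Suc i) - mn i))"
      using A mono by (intro sum_ennreal) auto
    also have "(\<Sum>i<N. A * (mn (Suc i) - mn i)) = A * (mn N - mn 0)"
      by (simp add: sum_distrib_left[symmetric] sum_lessThan_telescope)
    also have "\<dots> \<le> A * T" using A mb[of N] m0 by (simp add: mult_left_mono)
    finally show ?thesis by (simp add: ennreal_leI order_trans)
  qed
  then have "(\<Sum>n. ennreal (\<bar>f (mn (Suc n)) - f (mn n)\<bar> powr p)) \<le> ennreal (A * T)"
    unfolding suminf_eq_SUP by (intro SUP_least) auto
  then show ?thesis unfolding mn_def .
qed

lemma Z_integral:
  fixes N :: "'a measure" and B :: "real \<Rightarrow> 'a \<Rightarrow> real"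
  assumes F: "fbm N H B" and P: "prob_space N" and T: "0 < T" and r: "0 < r" and m: "0 < m"
    and measB: "\<And>t. 0 \<le> t \<Longrightarrow> B t \<in> borel_measurable N"
    and \<theta>: "\<theta> = 2 * (1/r)^(2*m) * 2 powr (- (2*m*H))" and \<theta>1: "\<theta> < 1"
  shows "(\<integral>\<^sup>+\<omega>. (\<Sum>n. ennreal (\<Sum>k<2^n. ((B (real (k+1)/2^n*T) \<omega> - B (real k/2^n*T) \<omega>) / r^n)^(2*m))) \<partial>N) < \<infinity>"
proof -
  have [measurable]: "B (real k / 2^n * T) \<in> borel_measurable N" for k n
    using measB T by simp
  define cm where "cm = fact (2*m) / (2^m * fact m :: real)"
  define a where "a n = cm * ((T/2^n) powr H)^(2*m) * (1/r^n)^(2*m)" for n :: nat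
  have cm: "0 \<le> cm" unfolding cm_def by simp
  have a0: "0 \<le> a n" for n unfolding a_def using cm r by simp
  have one: "(\<integral>\<^sup>+\<omega>. ennreal (((B (real (k+1)/2^n*T) \<omega> - B (real k/2^n*T) \<omega>) / r^n)^(2*m)) \<partial>N) = ennreal (a n)" for n k
  proof -
    have d: "real (k+1)/2^n*T - real k/2^n*T = T/2^n" by (simp add: field_simps)
    have D: "distributed N lborel (\<lambda>\<omega>. B (real (k+1)/2^n*T) \<omega> - B (real k/2^n*T) \<omega>)
               (\<lambda>x. ennreal (normal_density 0 ((T/2^n) powr H) x))"
      using fbm_incr[OF F, of "real k/2^n*T" "real (k+1)/2^n*T"] T unfolding d by (simp add: field_simps)
    have sp: "0 < (T/2^n) powr H" using T by simp
    have sqm: "(x^2)^m = (x^m)^2" for x :: real by (simp add: power_mult[symmetric] mult.commute)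
    have "(\<integral>\<^sup>+\<omega>. ennreal (((B (real (k+1)/2^n*T) \<omega> - B (real k/2^n*T) \<omega>) / r^n)^(2*m)) \<partial>N)
        = (\<integral>\<^sup>+\<omega>. ennreal ((1/r^n)^(2*m)) * ennreal ((B (real (k+1)/2^n*T) \<omega> - B (real k/2^n*T) \<omega>)^(2*m)) \<partial>N)"
      apply (rule nn_integral_cong)
      apply (subst ennreal_mult[symmetric])
      using r by (auto simp: zero_le_even_power power_divide)
    also have "\<dots> = ennreal ((1/r^n)^(2*m)) * (\<integral>\<^sup>+\<omega>. ennreal ((B (real (k+1)/2^n*T) \<omega> - B (real k/2^n*T) \<omega>)^(2*m)) \<partial>N)"
      by (rule nn_integral_cmult) measurable
    also have "(\<integral>\<^sup>+\<omega>. ennreal ((B (real (k+1)/2^n*T) \<omega> - B (real k/2^n*T) \<omega>)^(2*m)) \<partial>N)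
        = ennreal (fact (2*m) / ((2/((T/2^n) powr H)\<^sup>2)^m * fact m))"
      by (rule normal_moment_nn[OF D sp])
    also have "fact (2*m) / ((2/((T/2^n) powr H)\<^sup>2)^m * fact m) = cm * ((T/2^n) powr H)^(2*m)"
      unfolding cm_def using sp by (simp add: field_simps power_divide power_mult sqm)
    finally show ?thesis unfolding a_def using r cm by (simp add: ennreal_mult[symmetric] mult_ac)
  qed
  have an: "2^n * a n = cm * T powr (2*m*H) * \<theta>^n" for n
  proof -
    have "((T/2^n) powr H)^(2*m) = T powr (2*m*H) * (2 powr (- (2*m*H)))^n"
    proof -
      have "((T/2^n) powr H)^(2*m) = (T/2^n) powr (real (2*m) * H)" using T by (subst powr_power) auto
      also have "\<dots> = T powr (real (2*m) * H) / (2^n) powr (real (2*m) * H)" using T by (simp add: powr_divide)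
      also have "((2::real)^n) powr (real (2*m) * H) = (2 powr (real (2*m) * H))^n"
        by (simp add: powr_realpow[symmetric] powr_powr mult_ac)
      also have "(2 powr (- (2*m*H)))^n = 1 / (2 powr (real (2*m) * H))^n"
        by (simp add: powr_minus power_one_over inverse_eq_divide power_inverse)
      ultimately show ?thesis by (simp add: divide_inverse)
    qed
    moreover have "((1/r)^(2*m))^n = (1/r^n)^(2*m)"
      by (metis power_mult mult.commute power_one_over)
    moreover have "\<theta>^n = 2^n * ((1/r)^(2*m))^n * (2 powr (- (2*m*H)))^n"
      unfolding \<theta> by (simp add: power_mult_distrib)
    ultimately show ?thesis unfolding a_def by (simp add: mult_ac)
  qed
  have "(\<integral>\<^sup>+\<omega>. (\<Sum>n. ennreal (\<Sum>k<2^n. ((B (real (k+1)/2^n*T) \<omega> - B (real k/2^n*T) \<omega>) / r^n)^(2*m))) \<partial>N)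
      = (\<Sum>n. (\<integral>\<^sup>+\<omega>. ennreal (\<Sum>k<2^n. ((B (real (k+1)/2^n*T) \<omega> - B (real k/2^n*T) \<omega>) / r^n)^(2*m)) \<partial>N))"
    by (rule nn_integral_suminf) measurable
  also have "\<dots> = (\<Sum>n. ennreal (cm * T powr (2*m*H) * \<theta>^n))"
  proof (intro suminf_cong)
    fix n
    have e2: "ennreal ((2::real)^n) = (2::ennreal)^n" by (metis ennreal_numeral ennreal_power zero_le_numeral)
    have "(\<integral>\<^sup>+\<omega>. ennreal (\<Sum>k<2^n. ((B (real (k+1)/2^n*T) \<omega> - B (real k/2^n*T) \<omega>) / r^n)^(2*m)) \<partial>N)
        = (\<integral>\<^sup>+\<omega>. (\<Sum>k<2^n. ennreal (((B (real (k+1)/2^n*T) \<omega> - B (real k/2^n*T) \<omega>) / r^n)^(2*m))) \<partial>N)"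
      by (intro nn_integral_cong) (simp add: zero_le_even_power)
    also have "\<dots> = (\<Sum>k<2^n. (\<integral>\<^sup>+\<omega>. ennreal (((B (real (k+1)/2^n*T) \<omega> - B (real k/2^n*T) \<omega>) / r^n)^(2*m)) \<partial>N))"
      by (rule nn_integral_sum) measurable
    also have "\<dots> = (\<Sum>k<(2::nat)^n. ennreal (a n))" using one by simp
    also have "\<dots> = ennreal (2^n * a n)" using a0 e2 by (simp add: ennreal_mult)
    finally show "(\<integral>\<^sup>+\<omega>. ennreal (\<Sum>k<2^n. ((B (real (k+1)/2^n*T) \<omega> - B (real k/2^n*T) \<omega>) / r^n)^(2*m)) \<partial>N)
        = ennreal (cm * T powr (2*m*H) * \<theta>^n)" unfolding an .
  qed
  also have "\<dots> = ennreal (\<Sum>n. cm * T powr (2*m*H) * \<theta>^n)"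
  proof (rule suminf_ennreal2)
    have "0 \<le> \<theta>" unfolding \<theta> using r by simp
    then show "\<And>n. 0 \<le> cm * T powr (2*m*H) * \<theta>^n" using cm by simp
    show "summable (\<lambda>n. cm * T powr (2*m*H) * \<theta>^n)"
      using \<open>0 \<le> \<theta>\<close> \<theta>1 by (intro summable_mult summable_geometric) simp
  qed
  finally show ?thesis by simp
qed



theorem lemma4p4:
  fixes M :: "'a measure" and W :: "real \<Rightarrow> 'a \<Rightarrow> real^'d::finite"
    and B :: "real \<Rightarrow> 'a \<Rightarrow> real" and H T p :: real
  assumes "brownian_motion M W"
    and "0 < T"
    and "1/2 < H" and "H < 1"
    and "fbm (completion M) H B"
    and "\<forall>t\<ge>0. B t \<in> borel_measurable (sigma (space M) (bm_filt M W t))"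
    and "1 / H < p"
  shows "in_Q M W T p B"
proof -
  have PM: "prob_space M" using assms(1) unfolding brownian_motion_def by blast
  have P: "prob_space (completion M)" using prob_space.prob_space_completion[OF PM] .
  have F: "fbm (completion M) H B" using assms(5) .
  have T: "0 < T" using assms(2) .
  have measB: "\<And>t. 0 \<le> t \<Longrightarrow> B t \<in> borel_measurable (completion M)" using F unfolding fbm_def by blast
  have contB: "\<And>\<omega>. \<omega> \<in> space M \<Longrightarrow> continuous_on {0..} (\<lambda>t. B t \<omega>)" using F unfolding fbm_def by simp
  have H0: "0 < H" using assms(3) by simp
  have "0 < 1/H" using H0 by simp
  then have p0: "0 < p" using assms(7) by linarith
  have gH: "1/p < H" using assms(7) H0 p0 by (simp add: field_simps)
  define e where "e = H - 1/p"
  have e0: "0 < e" unfolding e_def using gH by simp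
  define m :: nat where "m = nat \<lceil>p + 1/e\<rceil> + 1"
  have mge: "p + 1/e < real m" unfolding m_def by linarith
  have m0: "0 < m" unfolding m_def by simp
  have "0 < 1/e" using e0 by simp
  then have "p < real m" using mge by linarith
  then have mp: "p \<le> real (2*m)" by simp
  have me: "1 < real m * e"
  proof -
    have "1/e < real m" using mge p0 by linarith
    then show ?thesis using e0 by (simp add: field_simps)
  qed
  define r where "r = 2 powr (- (1/p))"
  define K where "K = 1 + 2*(r/(1-r))"
  have r0: "0 < r" and r1: "r < 1" unfolding r_def using p0 by (auto intro!: powr_less_one)
  have K0: "0 \<le> K" unfolding K_def using r0 r1 by simp
  define \<theta> where "\<theta> = 2 * (1/r)^(2*m) * 2 powr (- (2*m*H))"
  have \<theta>1: "\<theta> < 1"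
  proof -
    have "1/r = 2 powr (1/p)" unfolding r_def by (simp add: powr_minus divide_inverse)
    then have "(1/r)^(2*m) = 2 powr (real (2*m) * (1/p))" by (simp add: powr_power)
    then have "\<theta> = 2 powr (1 + real (2*m) * (1/p) + (- (2*m*H)))"
      unfolding \<theta>_def by (simp only: powr_add powr_one)
    also have "1 + real (2*m) * (1/p) + (- (2*m*H)) = 1 - 2 * (real m * e)" unfolding e_def
      by (simp add: algebra_simps)
    also have "2 powr (1 - 2 * (real m * e)) < 1" using me by (intro powr_less_one) auto
    finally show ?thesis .
  qed
  define Z where "Z \<omega> = (\<Sum>n. ennreal (\<Sum>k<2^n. ((B (real (k+1)/2^n*T) \<omega> - B (real k/2^n*T) \<omega>) / r^n)^(2*m)))" for \<omega>
  have Zint: "integral\<^sup>N (completion M) Z < \<infinity>"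
    using Z_integral[OF F P T r0 m0 measB \<theta>_def \<theta>1] unfolding Z_def by simp
  have [measurable]: "B (real k / 2^n * T) \<in> borel_measurable (completion M)" for k n
    using measB T by simp
  have Zmeas[measurable]: "Z \<in> borel_measurable (completion M)" unfolding Z_def by measurable
  have AE: "AE \<omega> in completion M. Z \<omega> \<noteq> \<infinity> \<and> B 0 \<omega> = 0"
    using nn_integral_PInf_AE[OF Zmeas] Zint fbm_zero[OF F] by auto
  have key: "(\<forall>S. random_partition M W S \<longrightarrow> Qsum p T B S \<omega> \<le> ennreal (2 * K powr p) * (1 + Z \<omega>)) \<and>
      ennreal ((SUP t\<in>{0..T}. \<bar>B t \<omega>\<bar>)\<^sup>2) \<le> ennreal (K^2) * (1 + Z \<omega>)"
    if \<omega>: "\<omega> \<in> space M" and Zf: "Z \<omega> \<noteq> \<infinity>" and B0: "B 0 \<omega> = 0" for \<omega>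
  proof -
    define z where "z = enn2real (Z \<omega>)"
    have Zz: "Z \<omega> = ennreal z" and z0: "0 \<le> z" unfolding z_def using Zf by (auto simp: less_top)
    define L where "L = z powr (1/(2*m))"
    have L0: "0 \<le> L" unfolding L_def by simp
    define g where "g x = B (x*T) \<omega>" for x
    have cont: "continuous_on {0..1} g" unfolding g_def
      by (rule continuous_on_compose2[OF contB[OF \<omega>]]) (use T in \<open>auto intro!: continuous_intros\<close>)
    have inc: "\<bar>g (real (k+1)/2^n) - g (real k/2^n)\<bar> \<le> L * r^n" if k: "k < 2^n" for n k
    proof -
      define D where "D = B (real (k+1)/2^n*T) \<omega> - B (real k/2^n*T) \<omega>"
      define f where "f n' = ennreal (\<Sum>k<2^n'. ((B (real (k+1)/2^n'*T) \<omega> - B (real k/2^n'*T) \<omega>) / r^n')^(2*m))" for n'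
      have "ennreal ((D/r^n)^(2*m)) \<le> f n" unfolding f_def D_def
        by (intro ennreal_leI member_le_sum) (use k in \<open>auto simp: zero_le_even_power\<close>)
      also have "f n \<le> Z \<omega>" unfolding Z_def f_def[symmetric]
        using sum_le_suminf[OF summableI, of "{n}" f] by simp
      finally have "(D/r^n)^(2*m) \<le> z" unfolding Zz using z0 by simp
      moreover have "(\<bar>D\<bar>/r^n)^(2*m) = (D/r^n)^(2*m)"
      proof -
        have h: "\<bar>D\<bar>/r^n = \<bar>D/r^n\<bar>" using r0 by simp
        have e: "\<bar>D/r^n\<bar>^(2*m) = (D/r^n)^(2*m)" by (rule power_even_abs) simp
        show ?thesis unfolding h e ..
      qed
      ultimately have "(\<bar>D\<bar>/r^n)^(2*m) \<le> z" by simp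
      then have "\<bar>D\<bar>/r^n \<le> z powr (1/real (2*m))" using m0 r0 by (intro root_bound) auto
      then have "\<bar>D\<bar> \<le> L * r^n" unfolding L_def using r0 by (simp add: divide_le_eq)
      then show ?thesis unfolding g_def D_def by simp
    qed
    note HP = holder_powr[OF cont p0 L0 inc[unfolded r_def], folded r_def, folded K_def]
    note HS = holder_sup[OF cont p0 L0 inc[unfolded r_def], folded r_def, folded K_def]
    have LK: "(L*K) powr p \<le> K powr p * (1 + z)"
    proof -
      have "(L*K) powr p = K powr p * z powr (p/(2*m))"
        unfolding L_def using z0 K0 by (simp add: powr_mult powr_powr mult_ac)
      also have "\<dots> \<le> K powr p * (1 + z)"
        using z0 mp m0 p0 by (intro mult_left_mono powr_le_1plus) auto
      finally show ?thesis .
    qed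
    have part1: "Qsum p T B S \<omega> \<le> ennreal (2 * K powr p) * (1 + Z \<omega>)" if S: "random_partition M W S" for S
    proof -
      have s0: "S 0 \<omega> = 0" and sinc: "\<And>n. S n \<omega> < S (Suc n) \<omega>"
        using S \<omega> unfolding random_partition_def by auto
      define A where "A = (L*K) powr p * 2 / T"
      have A0: "0 \<le> A" unfolding A_def using T by simp
      have bnd: "\<bar>B v \<omega> - B u \<omega>\<bar> powr p \<le> A * (v - u)" if "0 \<le> u" "u \<le> v" "v \<le> T" for u v
      proof -
        have "\<bar>g (v/T) - g (u/T)\<bar> powr p \<le> (L*K) powr p * 2 * (v/T - u/T)"
          by (rule HP) (use that T in \<open>auto simp: divide_right_mono\<close>)
        then show ?thesis unfolding g_def A_def using T by (simp add: field_simps)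
      qed
      have "(\<Sum>n. ennreal (\<bar>B (min (S (Suc n) \<omega>) T) \<omega> - B (min (S n \<omega>) T) \<omega>\<bar> powr p)) \<le> ennreal (A * T)"
        by (rule partition_sum[where s="\<lambda>n. S n \<omega>" and f="\<lambda>t. B t \<omega>", OF s0 sinc T A0 bnd])
      also have "A * T = (L*K) powr p * 2" unfolding A_def using T by simp
      also have "ennreal ((L*K) powr p * 2) \<le> ennreal (2 * K powr p) * (1 + Z \<omega>)"
      proof -
        have e1: "ennreal (1 + z) = 1 + ennreal z" using z0 by (simp add: ennreal_plus)
        have e2: "ennreal (2 * K powr p * (1 + z)) = ennreal (2 * K powr p) * ennreal (1 + z)"
          using z0 by (intro ennreal_mult) auto
        have "ennreal ((L*K) powr p * 2) \<le> ennreal (2 * K powr p * (1 + z))"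
          using LK by (intro ennreal_leI) simp
        then show ?thesis unfolding Zz e2 e1 .
      qed
      finally show ?thesis unfolding Qsum_def using B0 p0 by simp
    qed
    have bt: "\<bar>B t \<omega>\<bar> \<le> L * K" if "t \<in> {0..T}" for t
    proof -
      have "\<bar>g (t/T) - g 0\<bar> \<le> L * K" by (rule HS) (use that T in auto)
      then show ?thesis unfolding g_def using B0 T by simp
    qed
    have sup1: "(SUP t\<in>{0..T}. \<bar>B t \<omega>\<bar>) \<le> L * K"
      using T bt by (intro cSUP_least) auto
    have sup0: "0 \<le> (SUP t\<in>{0..T}. \<bar>B t \<omega>\<bar>)"
    proof -
      have "\<bar>B 0 \<omega>\<bar> \<le> (SUP t\<in>{0..T}. \<bar>B t \<omega>\<bar>)"
        using T bt by (intro cSUP_upper bdd_aboveI2[where M="L*K"]) auto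
      then show ?thesis by simp
    qed
    have "(SUP t\<in>{0..T}. \<bar>B t \<omega>\<bar>)\<^sup>2 \<le> (L*K)^2" using sup0 sup1 by (intro power_mono) auto
    also have "(L*K)^2 = K^2 * z powr (1/m)"
    proof -
      have "L^2 = z powr (1/(2*m)) * z powr (1/(2*m))" unfolding L_def by (simp add: power2_eq_square)
      also have "\<dots> = z powr (1/m)" by (simp add: powr_add[symmetric])
      finally show ?thesis by (simp add: power_mult_distrib)
    qed
    also have "\<dots> \<le> K^2 * (1 + z)" using z0 m0 by (intro mult_left_mono powr_le_1plus) auto
    finally have sq: "(SUP t\<in>{0..T}. \<bar>B t \<omega>\<bar>)\<^sup>2 \<le> K^2 * (1 + z)" .
    have "ennreal ((SUP t\<in>{0..T}. \<bar>B t \<omega>\<bar>)\<^sup>2) \<le> ennreal (K^2) * (1 + Z \<omega>)"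
    proof -
      have e1: "ennreal (1 + z) = 1 + ennreal z" using z0 by (simp add: ennreal_plus)
      have e2: "ennreal (K^2 * (1 + z)) = ennreal (K^2) * ennreal (1 + z)"
        using z0 by (intro ennreal_mult) auto
      show ?thesis unfolding Zz e1[symmetric] e2[symmetric] by (rule ennreal_leI[OF sq])
    qed
    then show ?thesis using part1 by blast
  qed
  have intbound: "(\<integral>\<^sup>+\<omega>. ennreal c * (1 + Z \<omega>) \<partial>completion M) < \<infinity>" for c
  proof -
    have "(\<integral>\<^sup>+\<omega>. ennreal c * (1 + Z \<omega>) \<partial>completion M) = ennreal c * (1 + integral\<^sup>N (completion M) Z)"
      using prob_space.emeasure_space_1[OF P]
      by (simp add: nn_integral_cmult nn_integral_add)
    also have "\<dots> < \<infinity>" using Zint by (simp add: ennreal_mult_less_top)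
    finally show ?thesis .
  qed
  have Q: "Qnorm_pow M W T p B < \<infinity>"
  proof -
    have "Qnorm_pow M W T p B \<le> (\<integral>\<^sup>+\<omega>. ennreal (2 * K powr p) * (1 + Z \<omega>) \<partial>completion M)"
      unfolding Qnorm_pow_def
    proof (intro SUP_least, elim CollectE)
      fix S assume S: "random_partition M W S"
      show "(\<integral>\<^sup>+\<omega>. Qsum p T B S \<omega> \<partial>completion M) \<le> (\<integral>\<^sup>+\<omega>. ennreal (2 * K powr p) * (1 + Z \<omega>) \<partial>completion M)"
        by (rule nn_integral_mono_AE) (use AE key S in \<open>auto elim!: AE_mp\<close>)
    qed
    then show ?thesis using intbound le_less_trans by blast
  qed
  have WF: "wiener_functional M W T B"
    unfolding wiener_functional_def
  proof (intro conjI ballI)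
    show "B t \<in> borel_measurable (sigma (space M) (bm_filt M W t))" if "t \<in> {0..T}" for t
      using assms(6) that by auto
    show "continuous_on {0..T} (\<lambda>t. B t \<omega>)" if "\<omega> \<in> space M" for \<omega>
      using contB[OF that] by (rule continuous_on_subset) auto
    have "(\<integral>\<^sup>+\<omega>. ennreal ((SUP t\<in>{0..T}. \<bar>B t \<omega>\<bar>)\<^sup>2) \<partial>completion M) \<le> (\<integral>\<^sup>+\<omega>. ennreal (K^2) * (1 + Z \<omega>) \<partial>completion M)"
      by (rule nn_integral_mono_AE) (use AE key in \<open>auto elim!: AE_mp\<close>)
    then show "(\<integral>\<^sup>+\<omega>. ennreal ((SUP t\<in>{0..T}. \<bar>B t \<omega>\<bar>)\<^sup>2) \<partial>completion M) < \<infinity>"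
      using intbound le_less_trans by blast
  qed
  show ?thesis unfolding in_Q_def using WF Q by blast
qed

end
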